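(* Let $n\ge1$ and $k\ge1$ be integers. Then $$|\mathrm{SVT}((k),n)|=\binom{n+k-1}{k}\,{}_2F_1\!\left(\begin{matrix}k,\;1-n\\ k+1\end{matrix};-1\right).$$
   Context: Let $[n]=\{1,\dots,n\}$. For a partition $\lambda$ with at most $n$ nonzero parts, identified with its Young diagram $\{(i,j): 1\le j\le\lambda_i\}$ (row index $i$ increasing downward, column index $j$ to the right), a set-valued tableau of shape $\lambda$ with entries in $[n]$ assigns to every box $(i,j)$ a nonempty subset $T_{i,j}\subseteq[n]$ such that $\max T_{i,j}\le\min T_{i,j+1}$ and $\max T_{i,j}<\min T_{i+1,j}$ whenever these boxes exist; $\mathrm{SVT}(\lambda,n)$ is the set of these tableaux, and $(k)$ is the one-row partition with $k$ boxes. $(a)_0=1$, $(a)_m=a(a+1)\cdots(a+m-1)$, and ${}_2F_1\!\left(\begin{smallmatrix}a,\,b\\ c\end{smallmatrix};z\right)=\sum_{m\ge0}\frac{(a)_m(b)_m}{(c)_m}\frac{z^m}{m!}$, a finite sum when $b$ is a nonpositive integer. *)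

theory Defs
  imports Complex_Main
begin

text \<open>A partition is represented as a weakly decreasing list of positive parts
  lam = [lam_1, ..., lam_l]. Its Young diagram, with rows i and columns j
  indexed from 1.\<close>

definition is_partition :: "nat list \<Rightarrow> bool" where
  "is_partition lam \<longleftrightarrow> sorted (rev lam) \<and> (\<forall>x\<in>set lam. 0 < x)"

definition young_diagram :: "nat list \<Rightarrow> (nat \<times> nat) set" where
  "young_diagram lam = {(i, j). 1 \<le> i \<and> i \<le> length lam \<and> 1 \<le> j \<and> j \<le> lam ! (i - 1)}"

text \<open>A tableau is a function
  from boxes to subsets of [n]; it is taken to be the empty set outside the diagram
  so that distinct tableaux are distinct functions.\<close>

definition SVT :: "nat list \<Rightarrow> nat \<Rightarrow> ((nat \<times> nat) \<Rightarrow> nat set) set" where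
  "SVT lam n = {T.
     (\<forall>b. b \<notin> young_diagram lam \<longrightarrow> T b = {}) \<and>
     (\<forall>b\<in>young_diagram lam. T b \<noteq> {} \<and> T b \<subseteq> {1..n}) \<and>
     (\<forall>i j. (i, j) \<in> young_diagram lam \<and> (i, j + 1) \<in> young_diagram lam
              \<longrightarrow> Max (T (i, j)) \<le> Min (T (i, j + 1))) \<and>
     (\<forall>i j. (i, j) \<in> young_diagram lam \<and> (i + 1, j) \<in> young_diagram lam
              \<longrightarrow> Max (T (i, j)) < Min (T (i + 1, j)))}"

definition hyp2F1 :: "real \<Rightarrow> real \<Rightarrow> real \<Rightarrow> real \<Rightarrow> real" where
  "hyp2F1 a b c z = (\<Sum>m. pochhammer a m * pochhammer b m / pochhammer c m * z ^ m / fact m)"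

end

theory Submission
  imports Defs
begin


lemma yd1: "young_diagram [k] = {(i, j). i = 1 \<and> 1 \<le> j \<and> j \<le> k}"
  unfolding young_diagram_def by auto

lemma SVT1: "SVT [k] n = {T.
     (\<forall>i j. \<not> (i = 1 \<and> 1 \<le> j \<and> j \<le> k) \<longrightarrow> T (i, j) = {}) \<and>
     (\<forall>j. 1 \<le> j \<and> j \<le> k \<longrightarrow> T (1, j) \<noteq> {} \<and> T (1, j) \<subseteq> {1..n}) \<and>
     (\<forall>j. 1 \<le> j \<and> j + 1 \<le> k \<longrightarrow> Max (T (1, j)) \<le> Min (T (1, j + 1)))}"
  unfolding SVT_def yd1 by auto

lemma SVT0: "SVT [0] n = {\<lambda>_. {}}"
  unfolding SVT1 by auto

lemma pow_card: "card {S. b \<in> S \<and> S \<subseteq> {b..n}} = 2 ^ (n - b)" if "b \<le> n" for b n :: nat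
proof -
  have "{S. b \<in> S \<and> S \<subseteq> {b..n}} = insert b ` Pow {Suc b..n}"
  proof (rule set_eqI, rule iffI)
    fix S assume "S \<in> {S. b \<in> S \<and> S \<subseteq> {b..n}}"
    then have "S = insert b (S - {b})" "S - {b} \<in> Pow {Suc b..n}" by auto
    then show "S \<in> insert b ` Pow {Suc b..n}" by blast
  next
    fix S assume "S \<in> insert b ` Pow {Suc b..n}"
    then show "S \<in> {S. b \<in> S \<and> S \<subseteq> {b..n}}" using that by auto
  qed
  moreover have "inj_on (insert b) (Pow {Suc b..n})"
    proof (rule inj_onI)
    fix x y assume "x \<in> Pow {Suc b..n}" "y \<in> Pow {Suc b..n}" "insert b x = insert b y"
    then have "b \<notin> x" "b \<notin> y" by auto
    then show "x = y" using \<open>insert b x = insert b y\<close>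
      by (metis Diff_insert_absorb)
  qed
  ultimately show ?thesis using that by (simp add: card_image card_Pow)
qed

lemma SVT_fin: "T \<in> SVT [k] n \<Longrightarrow> 1 \<le> j \<Longrightarrow> j \<le> k \<Longrightarrow> finite (T (1, j)) \<and> T (1, j) \<noteq> {}"
proof -
  assume "T \<in> SVT [k] n" "1 \<le> j" "j \<le> k"
  then have "T (1, j) \<noteq> {} \<and> T (1, j) \<subseteq> {1..n}" unfolding SVT1 by blast
  then show ?thesis using finite_subset by blast
qed

lemma SVT_mono:
  assumes T: "T \<in> SVT [k] n" and j: "1 \<le> j" shows "j + d \<le> k \<Longrightarrow> Max (T (1, j)) \<le> Max (T (1, j + d))"
proof (induction d)
  case 0 then show ?case by simp
next
  case (Suc d)
  then have "Max (T (1, j)) \<le> Max (T (1, j + d))" by simp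
  also have "\<dots> \<le> Min (T (1, j + d + 1))" using T Suc.prems j unfolding SVT1 by auto
  also have "\<dots> \<le> Max (T (1, j + d + 1))"
  proof -
    have "finite (T (1, j + d + 1)) \<and> T (1, j + d + 1) \<noteq> {}"
      using SVT_fin[OF T, of "j + d + 1"] Suc.prems j by simp
    then show ?thesis by (meson Max_ge Min_in order_trans)
  qed
  finally show ?case by simp
qed

lemma SVT_dec: "SVT [Suc k] n = (\<Union>b\<in>{1..n}. (\<lambda>(T', S). T'((1, Suc k) := S)) ` (SVT [k] b \<times> {S. b \<in> S \<and> S \<subseteq> {b..n}}))"
proof (rule set_eqI, rule iffI)
  fix T assume T: "T \<in> SVT [Suc k] n"
  define S where "S = T (1, Suc k)"
  define b where "b = Min S"
  have finS: "finite S" "S \<noteq> {}" using SVT_fin[OF T, of "Suc k"] by (auto simp: S_def)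
  have Ssub: "S \<subseteq> {1..n}" using T unfolding SVT1 S_def by auto
  have bS: "b \<in> S" using finS by (simp add: b_def)
  have b: "b \<in> {1..n}" using bS Ssub by auto
  have S2: "S \<subseteq> {b..n}" using Ssub finS by (auto simp: b_def)
  define T' where "T' = T((1, Suc k) := {})"
  have TT: "T = T'((1, Suc k) := S)" by (auto simp: T'_def S_def)
  have "T' \<in> SVT [k] b"
    unfolding SVT1
  proof (intro CollectI conjI allI impI)
    fix i j :: nat assume "\<not> (i = 1 \<and> 1 \<le> j \<and> j \<le> k)"
    then show "T' (i, j) = {}" using T unfolding SVT1 T'_def by auto
  next
    fix j assume j: "1 \<le> j \<and> j \<le> k"
    then show "T' (1, j) \<noteq> {}" using T unfolding SVT1 T'_def by auto
    have "Max (T (1, j)) \<le> Max (T (1, k))" using SVT_mono[OF T, of j "k - j"] j by simp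
    also have "\<dots> \<le> Min (T (1, k + 1))" using T j unfolding SVT1 by auto
    finally have mx: "Max (T (1, j)) \<le> b" by (simp add: b_def S_def)
    have "\<forall>x\<in>T (1, j). x \<le> b"
    proof
      fix x assume "x \<in> T (1, j)"
      moreover have "finite (T (1, j))" using SVT_fin[OF T, of j] j by simp
      ultimately have "x \<le> Max (T (1, j))" by simp
      with mx show "x \<le> b" by simp
    qed
    moreover have "T (1, j) \<subseteq> {1..n}" using T j unfolding SVT1 by auto
    ultimately show "T' (1, j) \<subseteq> {1..b}" using j by (auto simp: T'_def)
  next
    fix j assume j: "1 \<le> j \<and> j + 1 \<le> k"
    then show "Max (T' (1, j)) \<le> Min (T' (1, j + 1))" using T unfolding SVT1 T'_def by auto
  qed
  then have "(T', S) \<in> SVT [k] b \<times> {S. b \<in> S \<and> S \<subseteq> {b..n}}" using bS S2 by simp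
  then have "T \<in> (\<lambda>(T', S). T'((1, Suc k) := S)) ` (SVT [k] b \<times> {S. b \<in> S \<and> S \<subseteq> {b..n}})"
    unfolding TT by (rule rev_image_eqI) simp
  then show "T \<in> (\<Union>b\<in>{1..n}. (\<lambda>(T', S). T'((1, Suc k) := S)) ` (SVT [k] b \<times> {S. b \<in> S \<and> S \<subseteq> {b..n}}))"
    using b by (rule UN_I[rotated])
next
  fix T assume "T \<in> (\<Union>b\<in>{1..n}. (\<lambda>(T', S). T'((1, Suc k) := S)) ` (SVT [k] b \<times> {S. b \<in> S \<and> S \<subseteq> {b..n}}))"
  then obtain b T' S where b: "b \<in> {1..n}" and T': "T' \<in> SVT [k] b" and bS: "b \<in> S" and S: "S \<subseteq> {b..n}"
    and TT: "T = T'((1, Suc k) := S)" by auto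
  have finS: "finite S" using S finite_subset by blast
  have minS: "Min S = b" using bS S finS by (intro Min_eqI) auto
  show "T \<in> SVT [Suc k] n"
    unfolding SVT1
  proof (intro CollectI conjI allI impI)
    fix i j :: nat assume "\<not> (i = 1 \<and> 1 \<le> j \<and> j \<le> Suc k)"
    then show "T (i, j) = {}" using T' unfolding SVT1 TT by auto
  next
    fix j assume j: "1 \<le> j \<and> j \<le> Suc k"
    show "T (1, j) \<noteq> {}" using T' j bS unfolding SVT1 TT by (cases "j = Suc k") auto
    show "T (1, j) \<subseteq> {1..n}"
    proof (cases "j = Suc k")
      case True then show ?thesis using b S by (auto simp: TT)
    next
      case False
      then have "T (1, j) = T' (1, j)" by (simp add: TT)
      also have "\<dots> \<subseteq> {1..b}" using T' j False unfolding SVT1 by auto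
      finally show ?thesis using b by auto
    qed
  next
    fix j assume j: "1 \<le> j \<and> j + 1 \<le> Suc k"
    show "Max (T (1, j)) \<le> Min (T (1, j + 1))"
    proof (cases "j = k")
      case True
      have "finite (T' (1, j)) \<and> T' (1, j) \<noteq> {}" using SVT_fin[OF T', of j] j True by simp
      moreover have "T' (1, j) \<subseteq> {1..b}" using T' j True unfolding SVT1 by auto
      ultimately have "Max (T' (1, j)) \<le> b" by auto
      then show ?thesis using True minS unfolding TT by simp
    next
      case False
      then show ?thesis using T' j unfolding SVT1 TT by auto
    qed
  qed
qed

lemma SVT_outside: "T \<in> SVT [k] b \<Longrightarrow> T (1, Suc k) = {}"
  unfolding SVT1 by auto

lemma inj_piece: "inj_on (\<lambda>(T', S). T'((1, Suc k) := S)) (SVT [k] b \<times> X)"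
proof (rule inj_onI)
  fix p q assume "p \<in> SVT [k] b \<times> X" "q \<in> SVT [k] b \<times> X"
    "(\<lambda>(T', S). T'((1, Suc k) := S)) p = (\<lambda>(T', S). T'((1, Suc k) := S)) q"
  then obtain T1 S1 T2 S2 where pq: "p = (T1, S1)" "q = (T2, S2)" and T1: "T1 \<in> SVT [k] b" and T2: "T2 \<in> SVT [k] b"
    and eq: "T1((1, Suc k) := S1) = T2((1, Suc k) := S2)" by (cases p, cases q) auto
  from eq have "S1 = S2" by (metis fun_upd_same)
  moreover have "T1 = T2"
  proof
    fix x show "T1 x = T2 x"
    proof (cases "x = (1, Suc k)")
      case True then show ?thesis using SVT_outside[OF T1] SVT_outside[OF T2] by simp
    next
      case False then show ?thesis using fun_cong[OF eq, of x] by simp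
    qed
  qed
  ultimately show "p = q" using pq by simp
qed

lemma piece_min: "T \<in> (\<lambda>(T', S). T'((1, Suc k) := S)) ` (SVT [k] b \<times> {S. b \<in> S \<and> S \<subseteq> {b..n}})
   \<Longrightarrow> Min (T (1, Suc k)) = b"
proof -
  assume "T \<in> (\<lambda>(T', S). T'((1, Suc k) := S)) ` (SVT [k] b \<times> {S. b \<in> S \<and> S \<subseteq> {b..n}})"
  then obtain T' S where "b \<in> S" "S \<subseteq> {b..n}" "T = T'((1, Suc k) := S)" by auto
  moreover have "finite S" using \<open>S \<subseteq> {b..n}\<close> finite_subset by blast
  ultimately show ?thesis by (intro Min_eqI) auto
qed

lemma card_step:
  assumes fin: "\<And>b. finite (SVT [k] b)"
  shows "finite (SVT [Suc k] n) \<and> card (SVT [Suc k] n) = (\<Sum>b\<in>{1..n}. 2 ^ (n - b) * card (SVT [k] b))"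
proof -
  define A where "A b = (\<lambda>(T', S). T'((1, Suc k) := S)) ` (SVT [k] b \<times> {S. b \<in> S \<and> S \<subseteq> {b..n}})" for b
  have finC: "finite {S. b \<in> S \<and> S \<subseteq> {b..n}}" for b
    by (rule finite_subset[of _ "Pow {b..n}"]) auto
  have finA: "finite (A b)" for b unfolding A_def
    by (intro finite_imageI finite_cartesian_product fin finC)
  have cardA: "card (A b) = 2 ^ (n - b) * card (SVT [k] b)" if "b \<in> {1..n}" for b
  proof -
    have "card (A b) = card (SVT [k] b \<times> {S. b \<in> S \<and> S \<subseteq> {b..n}})"
      unfolding A_def by (rule card_image[OF inj_piece])
    also have "\<dots> = card (SVT [k] b) * 2 ^ (n - b)" using that by (simp add: card_cartesian_product pow_card)
    finally show ?thesis by simp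
  qed
  have eq: "SVT [Suc k] n = (\<Union>b\<in>{1..n}. A b)" unfolding A_def by (rule SVT_dec)
  have disj: "\<forall>i\<in>{1..n}. \<forall>j\<in>{1..n}. i \<noteq> j \<longrightarrow> A i \<inter> A j = {}"
  proof (intro ballI impI)
    fix i j :: nat assume "i \<noteq> j"
    show "A i \<inter> A j = {}"
    proof (rule equals0I)
      fix T assume "T \<in> A i \<inter> A j"
      then have "T \<in> A i" "T \<in> A j" by auto
      have "Min (T (1, Suc k)) = i"
        by (rule piece_min[where n=n]) (use \<open>T \<in> A i\<close> in \<open>simp add: A_def\<close>)
      moreover have "Min (T (1, Suc k)) = j"
        by (rule piece_min[where n=n]) (use \<open>T \<in> A j\<close> in \<open>simp add: A_def\<close>)
      ultimately have "i = j" by simp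
      then show False using \<open>i \<noteq> j\<close> by simp
    qed
  qed
  have "card (SVT [Suc k] n) = (\<Sum>b\<in>{1..n}. card (A b))"
    unfolding eq by (rule card_UN_disjoint) (use finA disj in auto)
  also have "\<dots> = (\<Sum>b\<in>{1..n}. 2 ^ (n - b) * card (SVT [k] b))" by (rule sum.cong) (simp_all add: cardA)
  finally show ?thesis using eq finA by simp
qed

lemma SVT_finite: "finite (SVT [k] n)"
proof (induction k arbitrary: n)
  case 0 then show ?case by (simp add: SVT0)
next
  case (Suc k) then show ?case using card_step by blast
qed

lemma card_rec: "card (SVT [Suc k] n) = (\<Sum>b\<in>{1..n}. 2 ^ (n - b) * card (SVT [k] b))"
  using card_step SVT_finite by blast



definition D :: "nat \<Rightarrow> nat \<Rightarrow> nat" where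
  "D K N = (\<Sum>m\<le>N. (N + K + 1 choose (K + 1 + m)) * (K + m choose m))"

lemma D_step: "D (Suc K) (Suc N) = 2 * D (Suc K) N + D K (Suc N)"
proof -
  define f where "f m = (N + K + 2 choose (K + 2 + m)) * (K + 1 + m choose m)" for m
  define g where "g m = (N + K + 2 choose (K + 1 + m)) * (K + m choose m)" for m
  have L: "D (Suc K) (Suc N) = (\<Sum>m\<le>Suc N. f m) + (\<Sum>m\<le>Suc N. (N + K + 2 choose (K + 1 + m)) * (K + 1 + m choose m))"
    unfolding D_def f_def sum.distrib[symmetric]
  proof (rule sum.cong[OF refl])
    fix m
    have "(Suc N + Suc K + 1 choose (Suc K + 1 + m)) = (Suc (N + K + 2) choose Suc (K + 1 + m))" by simp
    also have "\<dots> = (N + K + 2 choose (K + 1 + m)) + (N + K + 2 choose (K + 2 + m))"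
      by (simp only: binomial_Suc_Suc) simp
    finally show "(Suc N + Suc K + 1 choose (Suc K + 1 + m)) * (Suc K + m choose m) =
      (N + K + 2 choose (K + 2 + m)) * (K + 1 + m choose m) + (N + K + 2 choose (K + 1 + m)) * (K + 1 + m choose m)"
      by (simp add: algebra_simps)
  qed
  have Pf: "sum f {..N} = D (Suc K) N"
    unfolding f_def D_def by (rule sum.cong) (simp_all add: algebra_simps)
  have fN: "f (Suc N) = 0" unfolding f_def by simp
  have P: "(\<Sum>m\<le>Suc N. f m) = D (Suc K) N" using Pf fN by simp
  have fz: "(N + K + 2 choose (K + 1 + 0)) * (K + 1 + 0 choose 0) = g 0" by (simp add: g_def)
  have Q: "(\<Sum>m\<le>Suc N. (N + K + 2 choose (K + 1 + m)) * (K + 1 + m choose m)) = g 0 + (\<Sum>m\<le>N. f m + g (Suc m))"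
  proof -
    have "(\<Sum>m\<le>Suc N. (N + K + 2 choose (K + 1 + m)) * (K + 1 + m choose m))
       = (N + K + 2 choose (K + 1 + 0)) * (K + 1 + 0 choose 0) + (\<Sum>m\<le>N. (N + K + 2 choose (K + 1 + Suc m)) * (K + 1 + Suc m choose Suc m))"
      by (rule sum.atMost_Suc_shift)
    also have "(\<Sum>m\<le>N. (N + K + 2 choose (K + 1 + Suc m)) * (K + 1 + Suc m choose Suc m)) = (\<Sum>m\<le>N. f m + g (Suc m))"
    proof (rule sum.cong[OF refl])
      fix m
      have "(K + 1 + Suc m choose Suc m) = (Suc (K + 1 + m) choose Suc m)" by simp
      also have "\<dots> = (K + 1 + m choose m) + (K + Suc m choose Suc m)" by (simp only: binomial_Suc_Suc) simp
      finally show "(N + K + 2 choose (K + 1 + Suc m)) * (K + 1 + Suc m choose Suc m) = f m + g (Suc m)"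
        by (simp add: f_def g_def algebra_simps)
    qed
    finally show ?thesis using fz by simp
  qed
  have R: "D K (Suc N) = g 0 + (\<Sum>m\<le>N. g (Suc m))"
    unfolding D_def g_def by (subst sum.atMost_Suc_shift) (simp add: algebra_simps)
  have "D (Suc K) (Suc N) = D (Suc K) N + (g 0 + (sum f {..N} + (\<Sum>m\<le>N. g (Suc m))))"
    by (simp only: L P Q sum.distrib)
  then show ?thesis using Pf R by linarith
qed

lemma D0: "D 0 N + 1 = 2 ^ Suc N"
proof -
  have "2 ^ Suc N = (\<Sum>k\<le>Suc N. Suc N choose k)" by (simp only: choose_row_sum)
  also have "\<dots> = 1 + (\<Sum>m\<le>N. Suc N choose Suc m)" by (subst sum.atMost_Suc_shift) simp
  also have "(\<Sum>m\<le>N. Suc N choose Suc m) = D 0 N" unfolding D_def by simp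
  finally show ?thesis by simp
qed

lemma D0_step: "D 0 (Suc N) = 2 * D 0 N + 1"
  using D0[of N] D0[of "Suc N"] by simp

lemma D_zero: "D K 0 = 1" unfolding D_def by simp

lemma split2: "(\<Sum>b\<in>{1..Suc n}. 2 ^ (Suc n - b) * X b) = 2 * (\<Sum>b\<in>{1..n}. 2 ^ (n - b) * X b) + (X (Suc n) :: nat)"
proof -
  have "(\<Sum>b\<in>{1..Suc n}. 2 ^ (Suc n - b) * X b) = (\<Sum>b\<in>{1..n}. 2 ^ (Suc n - b) * X b) + X (Suc n)"
    by (simp add: sum.cl_ivl_Suc)
  also have "(\<Sum>b\<in>{1..n}. 2 ^ (Suc n - b) * X b) = (\<Sum>b\<in>{1..n}. 2 * (2 ^ (n - b) * X b))"
    by (rule sum.cong) (simp_all add: Suc_diff_le)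
  finally show ?thesis by (simp add: sum_distrib_left)
qed



lemma nat_term: "m \<le> N \<Longrightarrow>
  (N + K + 1 choose (K + 1)) * (N choose m) * (K + 1) = (N + K + 1 choose (K + 1 + m)) * (K + m choose m) * (K + 1 + m)"
proof -
  assume m: "m \<le> N"
  have cm: "(N + K + 1 choose (K + 1 + m)) * (K + 1 + m choose (K + 1)) = (N + K + 1 choose (K + 1)) * (N choose m)"
    using choose_mult[of "K + 1" "K + 1 + m" "N + K + 1"] m by simp
  have sym: "(K + 1 + m choose (K + 1)) = (K + 1 + m choose m)"
    using binomial_symmetric[of m "K + 1 + m"] by simp
  have ab: "(K + 1) * (K + 1 + m choose m) = (K + 1 + m) * (K + m choose m)"
    using binomial_absorb_comp[of "K + 1 + m" m] by (simp add: add.commute add.left_commute)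
  have "(N + K + 1 choose (K + 1)) * (N choose m) * (K + 1) = (N + K + 1 choose (K + 1 + m)) * ((K + 1) * (K + 1 + m choose m))"
    unfolding cm[symmetric] sym by (simp only: mult.commute mult.left_commute mult.assoc)
  also have "\<dots> = (N + K + 1 choose (K + 1 + m)) * (K + m choose m) * (K + 1 + m)"
    using ab by (simp add: algebra_simps)
  finally show ?thesis .
qed

lemma poch_ratio: "pochhammer (real K + 1) m / pochhammer (real K + 2) m = (real K + 1) / (real K + 1 + real m)"
proof -
  have "pochhammer (real K + 1) (Suc m) = (real K + 1) * pochhammer (real K + 1 + 1) m" by (rule pochhammer_rec)
  moreover have "pochhammer (real K + 1) (Suc m) = (real K + 1 + real m) * pochhammer (real K + 1) m" by (rule pochhammer_rec')
  moreover have "pochhammer (real K + 2) m > 0" by (rule pochhammer_pos) simp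
  moreover have "real K + 1 + real m > 0" by simp
  ultimately show ?thesis by (simp add: field_simps)
qed

lemma term_eq: "pochhammer (real K + 1) m * pochhammer (- real N) m / pochhammer (real K + 1 + 1) m * (-1) ^ m / fact m
   = real (N choose m) * (real K + 1) / (real K + 1 + real m)"
proof -
  have g: "real (N choose m) = (-1) ^ m * pochhammer (- real N) m / fact m"
    by (simp add: binomial_gbinomial gbinomial_pochhammer)
  have "pochhammer (real K + 1) m * pochhammer (- real N) m / pochhammer (real K + 1 + 1) m * (-1) ^ m / fact m
      = (pochhammer (real K + 1) m / pochhammer (real K + 2) m) * ((-1) ^ m * pochhammer (- real N) m / fact m)"
    by (simp add: field_simps)
  also have "\<dots> = (real K + 1) / (real K + 1 + real m) * real (N choose m)" by (simp only: poch_ratio g)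
  finally show ?thesis by simp
qed

lemma hyp_eq: "real ((N + K + 1) choose (K + 1)) * hyp2F1 (real (Suc K)) (1 - real (Suc N)) (real (Suc K) + 1) (-1)
   = real (\<Sum>m\<le>N. (N + K + 1 choose (K + 1 + m)) * (K + m choose m))"
proof -
  have h: "hyp2F1 (real (Suc K)) (1 - real (Suc N)) (real (Suc K) + 1) (-1)
     = (\<Sum>m\<le>N. real (N choose m) * (real K + 1) / (real K + 1 + real m))"
  proof -
    have "hyp2F1 (real (Suc K)) (1 - real (Suc N)) (real (Suc K) + 1) (-1)
       = (\<Sum>m. pochhammer (real K + 1) m * pochhammer (- real N) m / pochhammer (real K + 1 + 1) m * (-1) ^ m / fact m)"
      unfolding hyp2F1_def by (simp add: add.commute)
    also have "\<dots> = (\<Sum>m\<le>N. pochhammer (real K + 1) m * pochhammer (- real N) m / pochhammer (real K + 1 + 1) m * (-1) ^ m / fact m)"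
      by (rule suminf_finite) (auto simp: pochhammer_of_nat_eq_0_iff)
    also have "\<dots> = (\<Sum>m\<le>N. real (N choose m) * (real K + 1) / (real K + 1 + real m))"
      by (simp only: term_eq)
    finally show ?thesis .
  qed
  have "real ((N + K + 1) choose (K + 1)) * (\<Sum>m\<le>N. real (N choose m) * (real K + 1) / (real K + 1 + real m))
     = (\<Sum>m\<le>N. real ((N + K + 1 choose (K + 1 + m)) * (K + m choose m)))"
    unfolding sum_distrib_left
  proof (rule sum.cong[OF refl])
    fix m assume "m \<in> {..N}"
    then have "real ((N + K + 1 choose (K + 1)) * (N choose m) * (K + 1)) = real ((N + K + 1 choose (K + 1 + m)) * (K + m choose m) * (K + 1 + m))"
      using nat_term[of m N K] by simp
    then have e: "real (N + K + 1 choose (K + 1)) * real (N choose m) * (real K + 1) = real ((N + K + 1 choose (K + 1 + m)) * (K + m choose m)) * (real K + 1 + real m)"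
      by (simp add: algebra_simps)
    have "real K + 1 + real m > 0" by simp
    then show "real (N + K + 1 choose (K + 1)) * (real (N choose m) * (real K + 1) / (real K + 1 + real m)) = real ((N + K + 1 choose (K + 1 + m)) * (K + m choose m))"
      using e by (simp add: field_simps)
  qed
  then show ?thesis using h by simp
qed


lemma c_suc: "card (SVT [Suc k] (Suc n)) = 2 * card (SVT [Suc k] n) + card (SVT [k] (Suc n))"
  by (simp only: card_rec split2)

lemma c_one: "card (SVT [k] (Suc 0)) = 1"
proof (induction k)
  case 0 then show ?case by (simp add: SVT0)
next
  case (Suc k) then show ?case by (simp add: card_rec)
qed

lemma main_nat: "card (SVT [Suc K] (Suc N)) = D K N"
proof (induction K arbitrary: N)
  case 0
  show ?case
  proof (induction N)
    case 0 then show ?case by (simp only: c_one D_zero)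
  next
    case (Suc N)
    then show ?case by (simp only: c_suc D0_step) (simp add: SVT0)
  qed
next
  case (Suc K)
  note IH = Suc.IH
  show ?case
  proof (induction N)
    case 0 then show ?case by (simp only: c_one D_zero)
  next
    case (Suc N)
    then show ?case using IH[of "Suc N"] by (simp only: c_suc D_step)
  qed
qed

theorem corollary3p3:
  fixes n k :: nat
  assumes "n \<ge> 1" and "k \<ge> 1"
  shows "real (card (SVT [k] n)) =
    real ((n + k - 1) choose k) * hyp2F1 (real k) (1 - real n) (real k + 1) (-1)"
proof -
  obtain N K where nk: "n = Suc N" "k = Suc K" using assms by (metis Suc_le_D One_nat_def)
  have "n + k - 1 = N + K + 1" "k = K + 1" using nk by simp_all
  then have "real ((n + k - 1) choose k) * hyp2F1 (real k) (1 - real n) (real k + 1) (-1)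
     = real ((N + K + 1) choose (K + 1)) * hyp2F1 (real (Suc K)) (1 - real (Suc N)) (real (Suc K) + 1) (-1)"
    using nk by simp
  also have "\<dots> = real (D K N)" unfolding D_def by (rule hyp_eq)
  also have "\<dots> = real (card (SVT [k] n))" using main_nat nk by simp
  finally show ?thesis by simp
qed

end
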